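(* Let $N,d\in\mathbb{N}^*$, $\alpha>0$, let $A\in\mathbb{R}_+^{N\times N}$ and let $\psi:\mathbb{R}_+\to\mathbb{R}_+$ satisfy $(r_1-r_2)(\psi(r_1)-\psi(r_2))\le0$ for all $r_1,r_2\ge0$ and $0<\psi(r)\le\psi(0)\le1$ for all $r\ge0$. Assume that the directed graph on $\{1,\dots,N\}$ with an edge $i\to j$ iff $i\ne j$ and $A_{ij}>0$ is irreducible (for all $i,j$ there is a path from $i$ to $j$), and that there is a probability measure $\pi$ on $\{1,\dots,N\}$ with $\pi_iA_{ij}=\pi_jA_{ji}$ for all $i\ne j$. Let $(x_i,v_i)_{i}$ be a solution on $\mathbb{R}_+$ of $$\frac{dx_i}{dt}=v_i,\qquad \frac{dv_i}{dt}=\alpha\sum_{j\ne i}A_{ij}\psi(\|x_j-x_i\|_2)(v_j-v_i).$$ Let $\pi^*=\inf_i\pi_i$, $v^*=\sum_{i=1}^N\pi_iv_i(0)$, $\widetilde V(0)=\sqrt{\sum_{i=1}^N\pi_i\|v_i(0)-v^*\|_2^2}$, $X(0)=\sup_{i,j}\|x_i(0)-x_j(0)\|_2$, and let $c_P$ be the Poincaré constant of $A$. If $$\widetilde V(0)<\frac{\alpha c_P\sqrt{\pi^*}}{2}\int_{X(0)}^{+\infty}\psi(r)\,dr,$$ then the solution flocks, i.e. $\sup_{t\ge0}X(t)<+\infty$ and $V(t)\to0$ as $t\to+\infty$, where $X(t)=\sup_{i,j}\|x_i(t)-x_j(t)\|_2$ and $V(t)=\sup_{i,j}\|v_i(t)-v_j(t)\|_2$;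 furthermore $v_i(t)\to v^*$ as $t\to+\infty$ for all $i$.
   Context: For $h:\{1,\dots,N\}\to\mathbb{R}$, $\mathcal{E}(h)=\frac12\sum_{i,j=1}^N(h(i)-h(j))^2\pi_iA_{ij}$ and $\mathbb{V}_\pi(h)=\sum_i\pi_i(h(i)-\pi(h))^2$ with $\pi(h)=\sum_i\pi_ih(i)$. The Poincaré constant is $c_P=\inf\{\mathcal{E}(h)/\mathbb{V}_\pi(h)\,:\,h:\{1,\dots,N\}\to\mathbb{R},\ \mathbb{V}_\pi(h)>0\}$ (it is positive under the assumptions; it equals the smallest positive eigenvalue of the Laplacian $D-A$, $D=\mathrm{diag}(\sum_kA_{ik})$). $\|\cdot\|_2$ is the Euclidean norm. *)

theory Defs
  imports "HOL-Analysis.Analysis"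
begin

definition pi_mean :: "('n::finite \<Rightarrow> real) \<Rightarrow> ('n \<Rightarrow> real) \<Rightarrow> real" where
  "pi_mean p h = (\<Sum>i\<in>UNIV. p i * h i)"

definition pi_variance :: "('n::finite \<Rightarrow> real) \<Rightarrow> ('n \<Rightarrow> real) \<Rightarrow> real" where
  "pi_variance p h = (\<Sum>i\<in>UNIV. p i * (h i - pi_mean p h)\<^sup>2)"

definition dirichlet_form ::
  "('n::finite \<Rightarrow> 'n \<Rightarrow> real) \<Rightarrow> ('n \<Rightarrow> real) \<Rightarrow> ('n \<Rightarrow> real) \<Rightarrow> real" where
  "dirichlet_form A p h = (1/2) * (\<Sum>i\<in>UNIV. \<Sum>j\<in>UNIV. (h i - h j)\<^sup>2 * p i * A i j)"

definition poincare_const ::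
  "('n::finite \<Rightarrow> 'n \<Rightarrow> real) \<Rightarrow> ('n \<Rightarrow> real) \<Rightarrow> real" where
  "poincare_const A p =
     Inf {dirichlet_form A p h / pi_variance p h | h. pi_variance p h > 0}"

definition graph_edges :: "('n \<Rightarrow> 'n \<Rightarrow> real) \<Rightarrow> ('n \<times> 'n) set" where
  "graph_edges A = {(i, j). i \<noteq> j \<and> A i j > 0}"

definition irreducible_graph :: "('n \<Rightarrow> 'n \<Rightarrow> real) \<Rightarrow> bool" where
  "irreducible_graph A \<longleftrightarrow> (\<forall>i j. (i, j) \<in> (graph_edges A)\<^sup>*)"

definition diam_fam :: "('n::finite \<Rightarrow> 'a::real_normed_vector) \<Rightarrow> real" where
  "diam_fam y = Max {norm (y i - y j) | i j. True}"

end

theory Submission imports Defs begin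

lemma dini_mono_aux:
  fixes f :: "real \<Rightarrow> real"
  assumes ab: "a \<le> b" and cont: "continuous_on {a..b} f"
    and dini: "\<And>t e. t \<in> {a..<b} \<Longrightarrow> e > 0 \<Longrightarrow> eventually (\<lambda>s. f s \<le> f t + e * (s - t)) (at_right t)"
    and e: "e > 0"
  shows "f b \<le> f a + e * (b - a)"
proof -
  define g where "g u = f u - e * (u - a)" for u
  define S where "S = {s\<in>{a..b}. \<forall>u\<in>{a..s}. g u \<le> g a}"
  have aS: "a \<in> S" using ab by (auto simp: S_def)
  have bdd: "bdd_above S" by (auto simp: S_def bdd_above_def)
  define s0 where "s0 = Sup S"
  have s0ge: "a \<le> s0" using aS bdd by (auto simp: s0_def intro: cSup_upper)
  have s0le: "s0 \<le> b" using aS by (auto simp: s0_def S_def intro!: cSup_least)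
  have contg: "continuous_on {a..b} g" unfolding g_def by (intro continuous_intros cont)
  have below: "g u \<le> g a" if "u \<in> {a..<s0}" for u
  proof -
    from that have "u < Sup S" by (simp add: s0_def)
    then obtain s where "s \<in> S" "u < s" using aS by (metis empty_iff less_cSupE)
    then show ?thesis using that by (auto simp: S_def)
  qed
  have gs0: "g s0 \<le> g a"
  proof (cases "a < s0")
    case True
    have "continuous_on (closure {a..<s0}) g"
      using True s0le by (auto intro: continuous_on_subset[OF contg])
    moreover have "s0 \<in> closure {a..<s0}" using True by auto
    ultimately show ?thesis using continuous_le_on_closure[of "{a..<s0}" g s0 "g a"] below by blast
  next
    case False then show ?thesis using s0ge by auto
  qed
  have s0S: "s0 \<in> S"
    using s0ge s0le below gs0 by (auto simp: S_def) (metis atLeastLessThan_iff less_eq_real_def)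
  have "s0 = b"
  proof (rule ccontr)
    assume "s0 \<noteq> b"
    then have lt: "s0 < b" using s0le by auto
    have "eventually (\<lambda>s. f s \<le> f s0 + e * (s - s0)) (at_right s0)"
      using dini[of s0 e] lt s0ge e by auto
    then obtain d where d: "d > s0" "\<And>s. s > s0 \<Longrightarrow> s < d \<Longrightarrow> f s \<le> f s0 + e * (s - s0)"
      by (auto simp: eventually_at_right_field)
    define s1 where "s1 = min b ((s0 + d) / 2)"
    have s1: "s0 < s1" "s1 \<le> b" "s1 < d" using lt d(1) unfolding s1_def by (auto simp: min_def)
    have "s1 \<in> S"
      unfolding S_def
    proof (safe)
      show "s1 \<in> {a..b}" using s1 s0ge by auto
      fix u assume u: "u \<in> {a..s1}"
      show "g u \<le> g a"
      proof (cases "u \<le> s0")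
        case True then show ?thesis using s0S u by (auto simp: S_def)
      next
        case False
        then have "f u \<le> f s0 + e * (u - s0)" using d(2)[of u] u s1 by auto
        then have "g u \<le> g s0" by (simp add: g_def algebra_simps)
        then show ?thesis using gs0 by linarith
      qed
    qed
    then have "s1 \<le> s0" using bdd by (auto simp: s0_def intro: cSup_upper)
    then show False using s1 by auto
  qed
  then have "g b \<le> g a" using gs0 by simp
  then show ?thesis by (simp add: g_def algebra_simps)
qed

lemma dini_mono:
  fixes f :: "real \<Rightarrow> real"
  assumes ab: "a \<le> b" and cont: "continuous_on {a..b} f"
    and dini: "\<And>t e. t \<in> {a..<b} \<Longrightarrow> e > 0 \<Longrightarrow> eventually (\<lambda>s. f s \<le> f t + e * (s - t)) (at_right t)"
  shows "f b \<le> f a"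
proof (rule ccontr)
  assume "\<not> f b \<le> f a"
  define e where "e = (f b - f a) / (2 * (b - a + 1))"
  have e: "e > 0" using \<open>\<not> f b \<le> f a\<close> ab by (auto simp: e_def)
  have "f b \<le> f a + e * (b - a)" by (rule dini_mono_aux[OF ab cont dini e])
  moreover have "e * (b - a) < f b - f a"
  proof -
    have "e * (b - a) = (f b - f a) * ((b - a) / (2 * (b - a + 1)))" by (simp add: e_def)
    also have "\<dots> < (f b - f a) * 1"
      using \<open>\<not> f b \<le> f a\<close> ab by (intro mult_strict_left_mono) (auto simp: field_simps)
    finally show ?thesis by simp
  qed
  ultimately show False by linarith
qed

lemma vd_bound:
  fixes f :: "real \<Rightarrow> 'a::real_normed_vector"
  assumes "(f has_vector_derivative D) (at t within {t<..})" "e > 0"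
  shows "eventually (\<lambda>s. norm (f s - f t) \<le> (s - t) * (norm D + e)) (at_right t)"
proof -
  have "((\<lambda>y. norm (f y - f t - (y - t) *\<^sub>R D) / norm (y - t)) \<longlongrightarrow> 0) (at_right t)"
    using assms(1) unfolding has_vector_derivative_def has_derivative_iff_norm by auto
  then have "eventually (\<lambda>y. norm (f y - f t - (y - t) *\<^sub>R D) / norm (y - t) < e) (at_right t)"
    using assms(2) by (auto dest: order_tendstoD)
  moreover have "eventually (\<lambda>y. y > t) (at_right t)" by (simp add: eventually_at_right_less)
  ultimately show ?thesis
  proof eventually_elim
    case (elim s)
    then have "norm (f s - f t - (s - t) *\<^sub>R D) \<le> e * (s - t)" by (simp add: field_simps)
    moreover have "norm (f s - f t) \<le> norm (f s - f t - (s - t) *\<^sub>R D) + norm ((s - t) *\<^sub>R D)"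
      using norm_triangle_ineq[of "f s - f t - (s - t) *\<^sub>R D" "(s - t) *\<^sub>R D"] by simp
    moreover have "norm ((s - t) *\<^sub>R D) = (s - t) * norm D" using elim by simp
    ultimately show ?case by (simp add: algebra_simps)
  qed
qed

lemma rd_bound:
  fixes f :: "real \<Rightarrow> real"
  assumes "(f has_real_derivative D) (at t within {t<..})" "e > 0"
  shows "eventually (\<lambda>s. f s \<le> f t + (s - t) * (D + e)) (at_right t)"
proof -
  have "((\<lambda>y. (f y - f t) / (y - t)) \<longlongrightarrow> D) (at_right t)"
    using assms(1) by (simp add: has_field_derivative_iff)
  then have "eventually (\<lambda>y. (f y - f t) / (y - t) < D + e) (at_right t)"
    using order_tendstoD(2)[OF _, of _ D _ "D + e"] assms(2) by auto
  moreover have "eventually (\<lambda>y. y > t) (at_right t)" by (simp add: eventually_at_right_less)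
  ultimately show ?thesis
  proof eventually_elim
    case (elim s)
    then show ?case by (simp add: field_simps)
  qed
qed

lemma psi_anti_from:
  fixes \<psi> :: "real \<Rightarrow> real"
  assumes "\<And>r1 r2. r1 \<ge> 0 \<Longrightarrow> r2 \<ge> 0 \<Longrightarrow> (r1 - r2) * (\<psi> r1 - \<psi> r2) \<le> 0"
    and "0 \<le> r1" "r1 \<le> r2"
  shows "\<psi> r2 \<le> \<psi> r1"
proof (rule ccontr)
  assume "\<not> \<psi> r2 \<le> \<psi> r1"
  then have "r1 < r2" using assms(3) by (cases "r1 = r2") auto
  then have "0 < (r1 - r2) * (\<psi> r1 - \<psi> r2)" using \<open>\<not> \<psi> r2 \<le> \<psi> r1\<close> by (intro mult_neg_neg) auto
  then show False using assms(1)[of r1 r2] assms(2,3) by auto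
qed

lemma psi_meas:
  fixes \<psi> :: "real \<Rightarrow> real"
  assumes anti: "\<And>r1 r2. 0 \<le> r1 \<Longrightarrow> r1 \<le> r2 \<Longrightarrow> \<psi> r2 \<le> \<psi> r1"
    and S: "S \<subseteq> {0..}" "S \<in> sets borel"
  shows "(\<lambda>r. ennreal (\<psi> r) * indicator S r) \<in> borel_measurable borel"
proof -
  have "mono (\<lambda>r. - \<psi> (max 0 r))"
    by (auto simp: mono_def intro!: anti)
  then have "(\<lambda>r. - \<psi> (max 0 r)) \<in> borel_measurable borel" by (rule borel_measurable_mono)
  then have "(\<lambda>r. - (- \<psi> (max 0 r))) \<in> borel_measurable borel" by measurable
  then have m: "(\<lambda>r. \<psi> (max 0 r)) \<in> borel_measurable borel" by simp
  have "(\<lambda>r. ennreal (\<psi> (max 0 r)) * indicator S r) \<in> borel_measurable borel"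
    using m S(2) by measurable
  moreover have "ennreal (\<psi> (max 0 r)) * indicator S r = ennreal (\<psi> r) * indicator S r" for r
    using S(1) by (cases "r \<in> S") (auto simp: max_def)
  ultimately show ?thesis by simp
qed

definition PsiE :: "(real \<Rightarrow> real) \<Rightarrow> real \<Rightarrow> real \<Rightarrow> ennreal" where
  "PsiE \<psi> x0 y = (\<integral>\<^sup>+ r. ennreal (\<psi> r) * indicator {x0..y} r \<partial>lborel)"

lemma PsiE_step:
  fixes \<psi> :: "real \<Rightarrow> real"
  assumes anti: "\<And>r1 r2. 0 \<le> r1 \<Longrightarrow> r1 \<le> r2 \<Longrightarrow> \<psi> r2 \<le> \<psi> r1"
    and x0: "0 \<le> x0" and ab: "a \<le> b" and k: "\<And>r. a < r \<Longrightarrow> r \<le> b \<Longrightarrow> x0 \<le> r \<Longrightarrow> \<psi> r \<le> k"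
    and k0: "0 \<le> k"
  shows "PsiE \<psi> x0 b \<le> PsiE \<psi> x0 a + ennreal (k * (b - a))"
proof -
  have "PsiE \<psi> x0 b \<le> (\<integral>\<^sup>+ r. ennreal (\<psi> r) * indicator {x0..a} r + ennreal k * indicator {a<..b} r \<partial>lborel)"
    unfolding PsiE_def
  proof (intro nn_integral_mono)
    fix r
    show "ennreal (\<psi> r) * indicator {x0..b} r \<le> ennreal (\<psi> r) * indicator {x0..a} r + ennreal k * indicator {a<..b} r"
    proof (cases "x0 \<le> r \<and> r \<le> b")
      case True
      show ?thesis
      proof (cases "r \<le> a")
        case True then show ?thesis using \<open>x0 \<le> r \<and> r \<le> b\<close> by (simp add: indicator_def)
      next
        case False then show ?thesis using \<open>x0 \<le> r \<and> r \<le> b\<close> k[of r] by (simp add: indicator_def ennreal_leI)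
      qed
    next
      case False then show ?thesis by (auto simp: indicator_def)
    qed
  qed
  also have "\<dots> = PsiE \<psi> x0 a + (\<integral>\<^sup>+ r. ennreal k * indicator {a<..b} r \<partial>lborel)"
    unfolding PsiE_def
    by (rule nn_integral_add) (use anti x0 in \<open>auto intro!: psi_meas\<close>)
  also have "(\<integral>\<^sup>+ r. ennreal k * indicator {a<..b} r \<partial>lborel) = ennreal (k * (b - a))"
    using ab k0 by (simp add: nn_integral_cmult_indicator ennreal_mult)
  finally show ?thesis .
qed

lemma PsiE_mono:
  assumes "a \<le> b" shows "PsiE \<psi> x0 a \<le> PsiE \<psi> x0 b"
  unfolding PsiE_def using assms
  by (intro nn_integral_mono) (auto simp: indicator_def)

lemma PsiE_low: "y < x0 \<Longrightarrow> PsiE \<psi> x0 y = 0"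
  unfolding PsiE_def by simp

definition Psi :: "(real \<Rightarrow> real) \<Rightarrow> real \<Rightarrow> real \<Rightarrow> real" where
  "Psi \<psi> x0 y = enn2real (PsiE \<psi> x0 y)"

locale psi_ctx =
  fixes \<psi> :: "real \<Rightarrow> real" and x0 :: real
  assumes anti: "\<And>r1 r2. 0 \<le> r1 \<Longrightarrow> r1 \<le> r2 \<Longrightarrow> \<psi> r2 \<le> \<psi> r1"
    and pos: "\<And>r. 0 \<le> r \<Longrightarrow> 0 < \<psi> r"
    and le1: "\<And>r. 0 \<le> r \<Longrightarrow> \<psi> r \<le> 1"
    and x0: "0 \<le> x0"
begin

lemma PsiE_fin: "PsiE \<psi> x0 y < top"
proof (cases "y < x0")
  case True then show ?thesis by (simp add: PsiE_low)
next
  case False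
  have "PsiE \<psi> x0 y \<le> PsiE \<psi> x0 (x0 - 1) + ennreal (1 * (y - (x0 - 1)))"
    using False x0 by (intro PsiE_step anti le1) auto
  then show ?thesis by (simp add: PsiE_low top.not_eq_extremum le_less_trans)
qed

lemma PsiE_eq: "PsiE \<psi> x0 y = ennreal (Psi \<psi> x0 y)"
  using PsiE_fin[of y] by (simp add: Psi_def ennreal_enn2real_if less_top)

lemma Psi_nonneg: "0 \<le> Psi \<psi> x0 y"
  by (simp add: Psi_def)

lemma Psi_step:
  assumes "0 \<le> a" "a \<le> b" shows "Psi \<psi> x0 b \<le> Psi \<psi> x0 a + \<psi> a * (b - a)"
proof -
  have "PsiE \<psi> x0 b \<le> PsiE \<psi> x0 a + ennreal (\<psi> a * (b - a))"
    using assms x0 by (intro PsiE_step anti) (auto intro: less_imp_le pos)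
  then have "ennreal (Psi \<psi> x0 b) \<le> ennreal (Psi \<psi> x0 a + \<psi> a * (b - a))"
    using assms pos[of a] Psi_nonneg by (simp add: PsiE_eq ennreal_plus)
  then show ?thesis using assms pos[of a] Psi_nonneg
    by (subst (asm) ennreal_le_iff) auto
qed

lemma Psi_lip:
  assumes "a \<le> b" shows "Psi \<psi> x0 b \<le> Psi \<psi> x0 a + (b - a)"
proof -
  have "PsiE \<psi> x0 b \<le> PsiE \<psi> x0 a + ennreal (1 * (b - a))"
    using assms x0 by (intro PsiE_step anti) (auto intro: le1)
  then have "ennreal (Psi \<psi> x0 b) \<le> ennreal (Psi \<psi> x0 a + (b - a))"
    using assms Psi_nonneg by (simp add: PsiE_eq ennreal_plus)
  then show ?thesis using assms Psi_nonneg
    by (subst (asm) ennreal_le_iff) auto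
qed

lemma Psi_mono: assumes "a \<le> b" shows "Psi \<psi> x0 a \<le> Psi \<psi> x0 b"
  using PsiE_mono[OF assms, of \<psi> x0] Psi_nonneg by (simp add: PsiE_eq ennreal_le_iff)

lemma Psi_x0: "Psi \<psi> x0 x0 = 0"
proof -
  have "PsiE \<psi> x0 x0 \<le> (\<integral>\<^sup>+ r. ennreal 1 * indicator {x0..x0} r \<partial>lborel)"
    unfolding PsiE_def by (intro nn_integral_mono) (auto simp: indicator_def x0 le1)
  also have "\<dots> = 0" by (simp add: nn_integral_cmult_indicator)
  finally show ?thesis by (simp add: Psi_def)
qed

lemma Psi_dini:
  assumes "0 \<le> a" shows "Psi \<psi> x0 b \<le> Psi \<psi> x0 a + \<psi> a * max 0 (b - a)"
proof (cases "a \<le> b")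
  case True then show ?thesis using Psi_step[OF assms True] by simp
next
  case False then show ?thesis using Psi_mono[of b a] by simp
qed

lemma Psi_cont: "continuous_on UNIV (Psi \<psi> x0)"
proof (rule lipschitz_on_continuous_on)
  show "1-lipschitz_on UNIV (Psi \<psi> x0)"
  proof (rule lipschitz_onI)
    fix a b :: real
    show "dist (Psi \<psi> x0 a) (Psi \<psi> x0 b) \<le> 1 * dist a b"
      using Psi_lip[of a b] Psi_lip[of b a] Psi_mono[of a b] Psi_mono[of b a]
      by (cases "a \<le> b") (auto simp: dist_real_def abs_if)
  qed simp
qed

lemma PsiE_SUP: "(\<integral>\<^sup>+ r \<in> {x0..}. ennreal (\<psi> r) \<partial>lborel) = (SUP n. PsiE \<psi> x0 (x0 + real n))"
proof -
  have inc: "incseq (\<lambda>n r. ennreal (\<psi> r) * indicator {x0..x0 + real n} r)"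
    by (auto simp: incseq_def le_fun_def indicator_def)
  have meas: "\<And>n. (\<lambda>r. ennreal (\<psi> r) * indicator {x0..x0 + real n} r) \<in> borel_measurable lborel"
    using x0 by (auto intro!: psi_meas anti)
  have pw: "(SUP n. ennreal (\<psi> r) * indicator {x0..x0 + real n} r) = ennreal (\<psi> r) * indicator {x0..} r" for r
  proof (cases "x0 \<le> r")
    case True
    obtain n :: nat where n: "r - x0 \<le> real n" using real_arch_simple by blast
    show ?thesis
    proof (rule antisym)
      show "(SUP n. ennreal (\<psi> r) * indicator {x0..x0 + real n} r) \<le> ennreal (\<psi> r) * indicator {x0..} r"
        by (intro SUP_least) (auto simp: indicator_def)
      have "ennreal (\<psi> r) * indicator {x0..} r = ennreal (\<psi> r) * indicator {x0..x0 + real n} r"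
        using True n by (simp add: indicator_def)
      also have "\<dots> \<le> (SUP n. ennreal (\<psi> r) * indicator {x0..x0 + real n} r)"
        by (rule SUP_upper) simp
      finally show "ennreal (\<psi> r) * indicator {x0..} r \<le> (SUP n. ennreal (\<psi> r) * indicator {x0..x0 + real n} r)" .
    qed
  next
    case False then show ?thesis by (simp add: indicator_def)
  qed
  have "(\<integral>\<^sup>+ r. (SUP n. ennreal (\<psi> r) * indicator {x0..x0 + real n} r) \<partial>lborel)
      = (SUP n. \<integral>\<^sup>+ r. ennreal (\<psi> r) * indicator {x0..x0 + real n} r \<partial>lborel)"
    by (rule nn_integral_monotone_convergence_SUP[OF inc meas])
  then show ?thesis by (simp add: pw PsiE_def)
qed

end
lemma antisym_sum_zero:
  fixes w :: "'n::finite \<Rightarrow> 'n \<Rightarrow> real" and u :: "'n \<Rightarrow> 'a::real_vector"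
  assumes sym: "\<And>i j. i \<noteq> j \<Longrightarrow> w i j = w j i"
  shows "(\<Sum>i\<in>UNIV. \<Sum>j\<in>UNIV - {i}. w i j *\<^sub>R (u j - u i)) = 0"
proof -
  have e1: "(\<Sum>j\<in>UNIV - {i}. w i j *\<^sub>R (u j - u i)) = (\<Sum>j\<in>UNIV. w i j *\<^sub>R (u j - u i))" for i
    by (rule sum.mono_neutral_left) auto
  define S where "S = (\<Sum>i\<in>UNIV. \<Sum>j\<in>UNIV. w i j *\<^sub>R (u j - u i))"
  have "S = (\<Sum>j\<in>UNIV. \<Sum>i\<in>UNIV. w i j *\<^sub>R (u j - u i))"
    unfolding S_def by (rule sum.swap)
  also have "\<dots> = (\<Sum>j\<in>UNIV. \<Sum>i\<in>UNIV. - (w j i *\<^sub>R (u i - u j)))"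
    by (intro sum.cong refl) (metis (no_types, lifting) diff_self minus_diff_eq scaleR_minus_right scaleR_zero_right sym)
  also have "\<dots> = - S" by (simp add: S_def sum_negf)
  finally have "S = - S" .
  then have "2 *\<^sub>R S = 0" by (metis add.right_inverse scaleR_2)
  then have "S = 0" by simp
  then show ?thesis by (simp add: e1 S_def)
qed

lemma energy_identity:
  fixes w :: "'n::finite \<Rightarrow> 'n \<Rightarrow> real" and u :: "'n \<Rightarrow> 'a::real_inner"
  assumes sym: "\<And>i j. i \<noteq> j \<Longrightarrow> w i j = w j i"
  shows "(\<Sum>i\<in>UNIV. \<Sum>j\<in>UNIV. w i j * (u i \<bullet> (u j - u i))) = - (1/2) * (\<Sum>i\<in>UNIV. \<Sum>j\<in>UNIV. w i j * (norm (u j - u i))\<^sup>2)"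
proof -
  define S where "S = (\<Sum>i\<in>UNIV. \<Sum>j\<in>UNIV. w i j * (u i \<bullet> (u j - u i)))"
  have "S = (\<Sum>j\<in>UNIV. \<Sum>i\<in>UNIV. w i j * (u i \<bullet> (u j - u i)))"
    unfolding S_def by (rule sum.swap)
  also have "\<dots> = (\<Sum>i\<in>UNIV. \<Sum>j\<in>UNIV. w i j * (u j \<bullet> (u i - u j)))"
    by (intro sum.cong refl) (metis diff_self inner_zero_right mult_zero_right sym)
  finally have S2: "S = (\<Sum>i\<in>UNIV. \<Sum>j\<in>UNIV. w i j * (u j \<bullet> (u i - u j)))" .
  have "2 * S = (\<Sum>i\<in>UNIV. \<Sum>j\<in>UNIV. w i j * (u i \<bullet> (u j - u i)) + w i j * (u j \<bullet> (u i - u j)))"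
    by (simp add: S2 sum.distrib S_def[symmetric] flip: mult_2)
  also have "\<dots> = (\<Sum>i\<in>UNIV. \<Sum>j\<in>UNIV. - (w i j * (norm (u j - u i))\<^sup>2))"
    by (intro sum.cong refl) (simp add: power2_norm_eq_inner algebra_simps inner_diff_left inner_diff_right inner_commute)
  finally show ?thesis by (simp add: S_def sum_negf)
qed

lemma deriv_nonpos_mono:
  fixes f :: "real \<Rightarrow> real"
  assumes d: "\<And>t. a \<le> t \<Longrightarrow> (f has_real_derivative f' t) (at t within {a..})"
    and n: "\<And>t. a \<le> t \<Longrightarrow> f' t \<le> 0" and ab: "a \<le> b"
  shows "f b \<le> f a"
proof -
  have "continuous_on {a..b} f"
    unfolding continuous_on_eq_continuous_within
  proof
    fix t assume "t \<in> {a..b}"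
    then have "continuous (at t within {a..}) f" using d[of t] by (auto intro: DERIV_continuous)
    then show "continuous (at t within {a..b}) f" by (rule continuous_within_subset) auto
  qed
  moreover
  have "eventually (\<lambda>s. f s \<le> f t + e * (s - t)) (at_right t)" if "t \<in> {a..<b}" "e > 0" for t e
  proof -
    have "(f has_real_derivative f' t) (at t within {t<..})"
      using d[of t] that by (auto intro: DERIV_subset)
    from rd_bound[OF this \<open>e > 0\<close>] eventually_at_right_less[of t]
    show ?thesis
    proof (eventually_elim)
      case (elim s)
      then have "(s - t) * (f' t + e) \<le> (s - t) * e" using n[of t] that by (intro mult_left_mono) auto
      then show ?case using elim by (simp add: algebra_simps)
    qed
  qed
  ultimately show ?thesis by (rule dini_mono[OF ab])
qed
lemma diam_ge: "norm (y i - y j) \<le> diam_fam (y :: 'n::finite \<Rightarrow> 'a::real_normed_vector)"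
proof -
  have "{norm (y i - y j) | i j. True} = (\<lambda>(i, j). norm (y i - y j)) ` UNIV" by auto
  then have fin: "finite {norm (y i - y j) | i j. True}" by simp
  show ?thesis unfolding diam_fam_def by (rule Max_ge[OF fin]) blast
qed

lemma diam_le:
  assumes "\<And>i j. norm (y i - y j) \<le> B"
  shows "diam_fam (y :: 'n::finite \<Rightarrow> 'a::real_normed_vector) \<le> B"
proof -
  have "{norm (y i - y j) | i j. True} = (\<lambda>(i, j). norm (y i - y j)) ` UNIV" by auto
  then have fin: "finite {norm (y i - y j) | i j. True}" by simp
  show ?thesis unfolding diam_fam_def using assms by (subst Max_le_iff[OF fin]) auto
qed

lemma diam_nonneg: "0 \<le> diam_fam (y :: 'n::finite \<Rightarrow> 'a::real_normed_vector)"
  using diam_ge[of y undefined undefined] by simp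

lemma poincare_ineq:
  fixes A :: "'n::finite \<Rightarrow> 'n \<Rightarrow> real"
  assumes A: "\<And>i j. A i j \<ge> 0" and p: "\<And>i. p i \<ge> 0"
  shows "poincare_const A p * pi_variance p h \<le> dirichlet_form A p h"
proof -
  have E0: "0 \<le> dirichlet_form A p g" for g
    unfolding dirichlet_form_def using A p by (auto intro!: sum_nonneg mult_nonneg_nonneg)
  have V0: "0 \<le> pi_variance p g" for g
    unfolding pi_variance_def using p by (auto intro!: sum_nonneg mult_nonneg_nonneg)
  show ?thesis
  proof (cases "pi_variance p h > 0")
    case True
    have "bdd_below {dirichlet_form A p h / pi_variance p h | h. pi_variance p h > 0}"
      by (rule bdd_belowI[of _ 0]) (auto intro!: divide_nonneg_pos E0)
    then have "poincare_const A p \<le> dirichlet_form A p h / pi_variance p h"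
      unfolding poincare_const_def using True by (intro cInf_lower) auto
    then show ?thesis using True by (simp add: field_simps)
  next
    case False
    then have "pi_variance p h = 0" using V0[of h] by simp
    then show ?thesis using E0[of h] by simp
  qed
qed
lemma norm_quad:
  fixes a b c d :: "'a::real_normed_vector"
  shows "norm (a - b) \<le> norm (c - d) + norm (a - c) + norm (b - d)"
proof -
  have "norm (a - b) = norm (((c - d) + (a - c)) - (b - d))" by (simp add: algebra_simps)
  also have "\<dots> \<le> norm ((c - d) + (a - c)) + norm (b - d)" by (rule norm_triangle_ineq4)
  also have "\<dots> \<le> norm (c - d) + norm (a - c) + norm (b - d)"
    using norm_triangle_ineq[of "c - d" "a - c"] by simp
  finally show ?thesis .
qed

lemma diam_cont:
  fixes y :: "real \<Rightarrow> 'n::finite \<Rightarrow> 'a::real_normed_vector"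
  assumes "\<And>i. continuous (at t within S) (\<lambda>s. y s i)"
  shows "continuous (at t within S) (\<lambda>s. diam_fam (y s))"
  unfolding continuous_within tendsto_iff
proof (intro allI impI)
  fix e :: real assume e: "e > 0"
  have "\<forall>i. eventually (\<lambda>s. dist (y s i) (y t i) < e / 4) (at t within S)"
  proof
    fix i
    have "\<forall>\<epsilon>>0. eventually (\<lambda>s. dist (y s i) (y t i) < \<epsilon>) (at t within S)"
      using assms[of i] unfolding continuous_within tendsto_iff .
    moreover have "e / 4 > 0" using e by simp
    ultimately show "eventually (\<lambda>s. dist (y s i) (y t i) < e / 4) (at t within S)" by blast
  qed
  then have "eventually (\<lambda>s. \<forall>i. dist (y s i) (y t i) < e / 4) (at t within S)"
    by (intro eventually_all_finite) auto
  then show "eventually (\<lambda>s. dist (diam_fam (y s)) (diam_fam (y t)) < e) (at t within S)"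
  proof eventually_elim
    case (elim s)
    have a: "diam_fam (y s) \<le> diam_fam (y t) + e / 2"
    proof (rule diam_le)
      fix i j
      have "norm (y s i - y s j) \<le> norm (y t i - y t j) + norm (y s i - y t i) + norm (y s j - y t j)"
        by (rule norm_quad)
      also have "\<dots> \<le> diam_fam (y t) + e / 4 + e / 4"
        using elim[rule_format, of i] elim[rule_format, of j] diam_ge[of "y t" i j] by (simp add: dist_norm)
      finally show "norm (y s i - y s j) \<le> diam_fam (y t) + e / 2" by simp
    qed
    have b: "diam_fam (y t) \<le> diam_fam (y s) + e / 2"
    proof (rule diam_le)
      fix i j
      have "norm (y t i - y t j) \<le> norm (y s i - y s j) + norm (y t i - y s i) + norm (y t j - y s j)"
        by (rule norm_quad)
      also have "\<dots> \<le> diam_fam (y s) + e / 4 + e / 4"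
        using elim[rule_format, of i] elim[rule_format, of j] diam_ge[of "y s" i j] by (simp add: dist_norm norm_minus_commute)
      finally show "norm (y t i - y t j) \<le> diam_fam (y s) + e / 2" by simp
    qed
    show ?case using a b e by (simp add: dist_real_def abs_if)
  qed
qed

lemma exp_decay: "(k::real) > 0 \<Longrightarrow> ((\<lambda>t. c * exp (- k * t)) \<longlongrightarrow> 0) at_top"
proof -
  assume k: "k > 0"
  have "filterlim (\<lambda>t. k * t) at_top at_top"
    by (rule filterlim_tendsto_pos_mult_at_top[OF tendsto_const k filterlim_ident])
  then have "filterlim (\<lambda>t. - (k * t)) at_bot at_top"
    by (simp add: filterlim_uminus_at_bot)
  then have "((\<lambda>t. exp (- (k * t))) \<longlongrightarrow> 0) at_top"
    by (rule filterlim_compose[OF exp_at_bot])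
  then show ?thesis using tendsto_mult_right_zero[of _ at_top c] by simp
qed
locale flock =
  fixes A :: "'n::finite \<Rightarrow> 'n \<Rightarrow> real"
    and p :: "'n \<Rightarrow> real"
    and \<psi> :: "real \<Rightarrow> real"
    and \<alpha> :: real
    and x v :: "real \<Rightarrow> 'n \<Rightarrow> real ^ 'd::finite"
  assumes alpha_pos: "\<alpha> > 0"
    and A_nonneg: "\<And>i j. A i j \<ge> 0"
    and psi_mono: "\<And>r1 r2. r1 \<ge> 0 \<Longrightarrow> r2 \<ge> 0 \<Longrightarrow> (r1 - r2) * (\<psi> r1 - \<psi> r2) \<le> 0"
    and psi_bounds: "\<And>r. r \<ge> 0 \<Longrightarrow> 0 < \<psi> r \<and> \<psi> r \<le> \<psi> 0 \<and> \<psi> 0 \<le> 1"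
    and p_nonneg: "\<And>i. p i \<ge> 0"
    and p_sum: "(\<Sum>i\<in>UNIV. p i) = 1"
    and reversible: "\<And>i j. i \<noteq> j \<Longrightarrow> p i * A i j = p j * A j i"
    and dx: "\<And>i t. t \<ge> 0 \<Longrightarrow> ((\<lambda>s. x s i) has_vector_derivative v t i) (at t within {0..})"
    and dv: "\<And>i t. t \<ge> 0 \<Longrightarrow> ((\<lambda>s. v s i) has_vector_derivative
               (\<alpha> *\<^sub>R (\<Sum>j\<in>UNIV - {i}. (A i j * \<psi> (norm (x t j - x t i))) *\<^sub>R (v t j - v t i))))
               (at t within {0..})"
begin

definition "vs = (\<Sum>k\<in>UNIV. p k *\<^sub>R v 0 k)"
definition "acc t i = \<alpha> *\<^sub>R (\<Sum>j\<in>UNIV - {i}. (A i j * \<psi> (norm (x t j - x t i))) *\<^sub>R (v t j - v t i))"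
definition "W t = (\<Sum>i\<in>UNIV. p i * (norm (v t i - vs))\<^sup>2)"
definition "wt t i j = p i * A i j * \<psi> (norm (x t j - x t i))"

lemma anti: "0 \<le> r1 \<Longrightarrow> r1 \<le> r2 \<Longrightarrow> \<psi> r2 \<le> \<psi> r1"
  by (rule psi_anti_from[OF psi_mono])

lemma le1: "0 \<le> r \<Longrightarrow> \<psi> r \<le> 1"
  using psi_bounds[of r] by auto

lemma wt_sym: "i \<noteq> j \<Longrightarrow> wt t i j = wt t j i"
  unfolding wt_def using reversible[of i j] by (simp add: norm_minus_commute)

lemma dv': "t \<ge> 0 \<Longrightarrow> ((\<lambda>s. v s i) has_vector_derivative acc t i) (at t within {0..})"
  unfolding acc_def by (rule dv)

lemma mean_deriv:
  assumes "t \<ge> 0"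
  shows "((\<lambda>s. \<Sum>k\<in>UNIV. p k *\<^sub>R v s k) has_vector_derivative 0) (at t within {0..})"
proof -
  have "((\<lambda>s. \<Sum>k\<in>UNIV. p k *\<^sub>R v s k) has_vector_derivative (\<Sum>k\<in>UNIV. p k *\<^sub>R acc t k)) (at t within {0..})"
  proof (intro has_vector_derivative_sum)
    fix k
    show "((\<lambda>s. p k *\<^sub>R v s k) has_vector_derivative p k *\<^sub>R acc t k) (at t within {0..})"
      using has_vector_derivative_scaleR[OF DERIV_const dv'[OF assms, of k], of "p k"] by simp
  qed
  moreover have "(\<Sum>k\<in>UNIV. p k *\<^sub>R acc t k) = \<alpha> *\<^sub>R (\<Sum>i\<in>UNIV. \<Sum>j\<in>UNIV - {i}. wt t i j *\<^sub>R (v t j - v t i))"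
    by (simp add: acc_def wt_def scaleR_sum_right scaleR_right.sum mult_ac)
  moreover have "(\<Sum>i\<in>UNIV. \<Sum>j\<in>UNIV - {i}. wt t i j *\<^sub>R (v t j - v t i)) = 0"
    by (rule antisym_sum_zero) (rule wt_sym)
  ultimately show ?thesis by simp
qed

lemma mean_const:
  assumes "t \<ge> 0" shows "(\<Sum>k\<in>UNIV. p k *\<^sub>R v t k) = vs"
proof -
  obtain c where c: "\<And>s. s \<in> {0..} \<Longrightarrow> (\<Sum>k\<in>UNIV. p k *\<^sub>R v s k) = c"
    using has_vector_derivative_zero_constant[of "{0::real..}" "\<lambda>s. \<Sum>k\<in>UNIV. p k *\<^sub>R v s k"] mean_deriv
    by auto
  then show ?thesis using c[of 0] assms by (simp add: vs_def)
qed

end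
context flock begin

definition "Wd t = 2 * (\<Sum>i\<in>UNIV. p i * ((v t i - vs) \<bullet> acc t i))"

lemma W_deriv:
  assumes "t \<ge> 0" shows "(W has_real_derivative Wd t) (at t within {0..})"
proof -
  have "((\<lambda>s. p i * ((v s i - vs) \<bullet> (v s i - vs))) has_real_derivative p i * (2 * ((v t i - vs) \<bullet> acc t i))) (at t within {0..})" for i
  proof -
    have d1: "((\<lambda>s. v s i - vs) has_vector_derivative acc t i) (at t within {0..})"
      using has_vector_derivative_diff[OF dv'[OF assms] has_vector_derivative_const] by simp
    have "((\<lambda>s. (v s i - vs) \<bullet> (v s i - vs)) has_derivative (\<lambda>h. (v t i - vs) \<bullet> (h *\<^sub>R acc t i) + (h *\<^sub>R acc t i) \<bullet> (v t i - vs))) (at t within {0..})"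
      using has_derivative_inner[OF d1[unfolded has_vector_derivative_def] d1[unfolded has_vector_derivative_def]] .
    moreover have "(\<lambda>h. (v t i - vs) \<bullet> (h *\<^sub>R acc t i) + (h *\<^sub>R acc t i) \<bullet> (v t i - vs)) = (*) (2 * ((v t i - vs) \<bullet> acc t i))"
      by (auto simp: fun_eq_iff inner_commute algebra_simps)
    ultimately have "((\<lambda>s. (v s i - vs) \<bullet> (v s i - vs)) has_real_derivative 2 * ((v t i - vs) \<bullet> acc t i)) (at t within {0..})"
      by (simp add: has_field_derivative_def)
    then show ?thesis by (rule DERIV_cmult)
  qed
  then have "((\<lambda>s. \<Sum>i\<in>UNIV. p i * ((v s i - vs) \<bullet> (v s i - vs))) has_real_derivative (\<Sum>i\<in>UNIV. p i * (2 * ((v t i - vs) \<bullet> acc t i)))) (at t within {0..})"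
    by (intro DERIV_sum) auto
  moreover have "(\<lambda>s. \<Sum>i\<in>UNIV. p i * ((v s i - vs) \<bullet> (v s i - vs))) = W"
    by (auto simp: fun_eq_iff W_def power2_norm_eq_inner)
  moreover have "(\<Sum>i\<in>UNIV. p i * (2 * ((v t i - vs) \<bullet> acc t i))) = Wd t"
    by (simp add: Wd_def sum_distrib_left mult_ac)
  ultimately show ?thesis by simp
qed

lemma Wd_eq: "Wd t = - \<alpha> * (\<Sum>i\<in>UNIV. \<Sum>j\<in>UNIV. wt t i j * (norm (v t j - v t i))\<^sup>2)"
proof -
  define u where "u i = v t i - vs" for i
  have "(\<Sum>i\<in>UNIV. p i * ((v t i - vs) \<bullet> acc t i)) = \<alpha> * (\<Sum>i\<in>UNIV. \<Sum>j\<in>UNIV - {i}. wt t i j * (u i \<bullet> (u j - u i)))"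
    by (simp add: acc_def wt_def u_def inner_sum_right sum_distrib_left mult_ac)
  also have "(\<Sum>i\<in>UNIV. \<Sum>j\<in>UNIV - {i}. wt t i j * (u i \<bullet> (u j - u i))) = (\<Sum>i\<in>UNIV. \<Sum>j\<in>UNIV. wt t i j * (u i \<bullet> (u j - u i)))"
    by (intro sum.cong refl sum.mono_neutral_left) auto
  also have "\<dots> = - (1/2) * (\<Sum>i\<in>UNIV. \<Sum>j\<in>UNIV. wt t i j * (norm (u j - u i))\<^sup>2)"
    by (rule energy_identity) (rule wt_sym)
  finally show ?thesis by (simp add: Wd_def u_def)
qed

lemma W_nonneg: "0 \<le> W t"
  unfolding W_def using p_nonneg by (auto intro!: sum_nonneg)

end
context flock begin
lemma pairs_poincare:
  assumes "t \<ge> 0"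
  shows "2 * poincare_const A p * W t \<le> (\<Sum>i\<in>UNIV. \<Sum>j\<in>UNIV. p i * A i j * (norm (v t j - v t i))\<^sup>2)"
proof -
  define h where "h k i = v t i $ k" for k i
  have mean: "pi_mean p (h k) = vs $ k" for k
  proof -
    have "pi_mean p (h k) = (\<Sum>i\<in>UNIV. p i *\<^sub>R v t i) $ k"
      by (simp add: pi_mean_def h_def)
    then show ?thesis using mean_const[OF assms] by simp
  qed
  have n2: "(norm (z :: real^'d))\<^sup>2 = (\<Sum>k\<in>UNIV. (z $ k)\<^sup>2)" for z
    unfolding power2_norm_eq_inner inner_vec_def by (simp add: power2_eq_square)
  have "(\<Sum>i\<in>UNIV. \<Sum>j\<in>UNIV. p i * A i j * (norm (v t j - v t i))\<^sup>2)
      = (\<Sum>i\<in>UNIV. \<Sum>j\<in>UNIV. \<Sum>k\<in>UNIV. (h k i - h k j)\<^sup>2 * p i * A i j)"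
    by (intro sum.cong refl) (simp add: n2 h_def sum_distrib_left sum_distrib_right power2_commute mult_ac)
  also have "\<dots> = (\<Sum>i\<in>UNIV. \<Sum>k\<in>UNIV. \<Sum>j\<in>UNIV. (h k i - h k j)\<^sup>2 * p i * A i j)"
    by (intro sum.cong refl sum.swap)
  also have "\<dots> = (\<Sum>k\<in>UNIV. \<Sum>i\<in>UNIV. \<Sum>j\<in>UNIV. (h k i - h k j)\<^sup>2 * p i * A i j)"
    by (rule sum.swap)
  also have "\<dots> = (\<Sum>k\<in>UNIV. 2 * dirichlet_form A p (h k))"
    by (simp add: dirichlet_form_def)
  finally have e1: "(\<Sum>i\<in>UNIV. \<Sum>j\<in>UNIV. p i * A i j * (norm (v t j - v t i))\<^sup>2) = (\<Sum>k\<in>UNIV. 2 * dirichlet_form A p (h k))" .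
  have "W t = (\<Sum>i\<in>UNIV. \<Sum>k\<in>UNIV. p i * (h k i - pi_mean p (h k))\<^sup>2)"
    unfolding W_def by (intro sum.cong refl) (simp add: n2 mean h_def sum_distrib_left)
  also have "\<dots> = (\<Sum>k\<in>UNIV. pi_variance p (h k))"
    unfolding pi_variance_def by (rule sum.swap)
  finally have "2 * poincare_const A p * W t = (\<Sum>k\<in>UNIV. 2 * (poincare_const A p * pi_variance p (h k)))"
    by (simp add: sum_distrib_left mult_ac)
  also have "\<dots> \<le> (\<Sum>k\<in>UNIV. 2 * dirichlet_form A p (h k))"
    by (intro sum_mono mult_left_mono poincare_ineq A_nonneg p_nonneg) auto
  finally show ?thesis using e1 by simp
qed
end
context flock begin

definition "X t = diam_fam (x t)"

lemma X_nonneg: "0 \<le> X t" by (simp add: X_def diam_nonneg)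

lemma X_cont: "continuous_on {0..} X"
  unfolding continuous_on_eq_continuous_within X_def
proof
  fix t :: real assume "t \<in> {0..}"
  then show "continuous (at t within {0..}) (\<lambda>s. diam_fam (x s))"
    using dx by (intro diam_cont has_vector_derivative_continuous) auto
qed

lemma W_cont: "continuous_on {0..} W"
  unfolding continuous_on_eq_continuous_within
  using W_deriv by (auto intro: DERIV_continuous)

lemma Wd_bound:
  assumes t: "t \<ge> 0" and R: "X t \<le> R" and cP: "poincare_const A p \<ge> 0"
  shows "Wd t \<le> - 2 * \<alpha> * poincare_const A p * \<psi> R * W t"
proof -
  have R0: "0 \<le> R" using R X_nonneg[of t] by linarith
  have psiR: "0 \<le> \<psi> R" using psi_bounds[OF R0] by auto
  have "\<psi> R * (\<Sum>i\<in>UNIV. \<Sum>j\<in>UNIV. p i * A i j * (norm (v t j - v t i))\<^sup>2)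
      \<le> (\<Sum>i\<in>UNIV. \<Sum>j\<in>UNIV. wt t i j * (norm (v t j - v t i))\<^sup>2)"
    unfolding sum_distrib_left
  proof (intro sum_mono)
    fix i j
    have "norm (x t j - x t i) \<le> R" using diam_ge[of "x t" j i] R by (simp add: X_def)
    then have "\<psi> R \<le> \<psi> (norm (x t j - x t i))" by (intro anti) auto
    then have "\<psi> R * (p i * A i j * (norm (v t j - v t i))\<^sup>2) \<le> \<psi> (norm (x t j - x t i)) * (p i * A i j * (norm (v t j - v t i))\<^sup>2)"
      using p_nonneg A_nonneg by (intro mult_right_mono) auto
    then show "\<psi> R * (p i * A i j * (norm (v t j - v t i))\<^sup>2) \<le> wt t i j * (norm (v t j - v t i))\<^sup>2"
      by (simp add: wt_def mult_ac)
  qed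
  moreover have "\<psi> R * (2 * poincare_const A p * W t) \<le> \<psi> R * (\<Sum>i\<in>UNIV. \<Sum>j\<in>UNIV. p i * A i j * (norm (v t j - v t i))\<^sup>2)"
    using pairs_poincare[OF t] psiR by (intro mult_left_mono) auto
  ultimately have "\<psi> R * (2 * poincare_const A p * W t) \<le> (\<Sum>i\<in>UNIV. \<Sum>j\<in>UNIV. wt t i j * (norm (v t j - v t i))\<^sup>2)"
    by linarith
  then have "\<alpha> * (\<psi> R * (2 * poincare_const A p * W t)) \<le> \<alpha> * (\<Sum>i\<in>UNIV. \<Sum>j\<in>UNIV. wt t i j * (norm (v t j - v t i))\<^sup>2)"
    using alpha_pos by (intro mult_left_mono) auto
  then show ?thesis by (simp add: Wd_eq mult_ac)
qed

lemma W_anti: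
  assumes "0 \<le> s" "s \<le> t" and cP: "poincare_const A p \<ge> 0"
  shows "W t \<le> W s"
proof (rule deriv_nonpos_mono[of s W Wd])
  fix u assume u: "s \<le> u"
  show "(W has_real_derivative Wd u) (at u within {s..})"
    using W_deriv[of u] u assms by (auto intro: DERIV_subset)
  have "Wd u \<le> - 2 * \<alpha> * poincare_const A p * \<psi> (X u) * W u"
    using Wd_bound[of u "X u"] u assms by auto
  also have "\<dots> \<le> 0"
    using alpha_pos cP psi_bounds[OF X_nonneg[of u]] W_nonneg[of u]
    by (simp add: mult_nonneg_nonneg)
  finally show "Wd u \<le> 0" .
qed (use assms in auto)

lemma vel_bound:
  assumes pm: "0 < Min (range p)"
  shows "norm (v t i - vs) \<le> sqrt (W t) / sqrt (Min (range p))"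
proof -
  have "p i * (norm (v t i - vs))\<^sup>2 \<le> W t"
    unfolding W_def using p_nonneg by (intro member_le_sum) auto
  moreover have "Min (range p) * (norm (v t i - vs))\<^sup>2 \<le> p i * (norm (v t i - vs))\<^sup>2"
    by (intro mult_right_mono) auto
  ultimately have "(norm (v t i - vs))\<^sup>2 \<le> W t / Min (range p)"
    using pm by (simp add: field_simps)
  then have "norm (v t i - vs) \<le> sqrt (W t / Min (range p))"
    by (simp add: real_le_rsqrt)
  then show ?thesis by (simp add: real_sqrt_divide)
qed

lemma vel_pair_bound:
  assumes pm: "0 < Min (range p)"
  shows "norm (v t i - v t j) \<le> 2 / sqrt (Min (range p)) * sqrt (W t)"
proof -
  have "norm (v t i - v t j) \<le> norm (v t i - vs) + norm (v t j - vs)"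
    using norm_quad[of "v t i" "v t j" vs vs] by (simp add: norm_minus_commute)
  then show ?thesis using vel_bound[OF pm, of t i] vel_bound[OF pm, of t j] by simp
qed

lemma X_dini:
  assumes t: "0 \<le> t" and pm: "0 < Min (range p)" and e: "e > 0"
  shows "eventually (\<lambda>s. X s \<le> X t + (s - t) * (2 / sqrt (Min (range p)) * sqrt (W t) + e)) (at_right t)"
proof -
  have "\<forall>ij. eventually (\<lambda>s. norm ((x s (fst ij) - x s (snd ij)) - (x t (fst ij) - x t (snd ij)))
            \<le> (s - t) * (norm (v t (fst ij) - v t (snd ij)) + e)) (at_right t)"
  proof
    fix ij :: "'n \<times> 'n"
    have "((\<lambda>s. x s (fst ij) - x s (snd ij)) has_vector_derivative v t (fst ij) - v t (snd ij)) (at t within {0..})"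
      by (intro has_vector_derivative_diff dx t)
    then have "((\<lambda>s. x s (fst ij) - x s (snd ij)) has_vector_derivative v t (fst ij) - v t (snd ij)) (at t within {t<..})"
      by (rule has_vector_derivative_within_subset) (use t in auto)
    from vd_bound[OF this e] show "eventually (\<lambda>s. norm ((x s (fst ij) - x s (snd ij)) - (x t (fst ij) - x t (snd ij)))
            \<le> (s - t) * (norm (v t (fst ij) - v t (snd ij)) + e)) (at_right t)" .
  qed
  then have "eventually (\<lambda>s. \<forall>ij. norm ((x s (fst ij) - x s (snd ij)) - (x t (fst ij) - x t (snd ij)))
            \<le> (s - t) * (norm (v t (fst ij) - v t (snd ij)) + e)) (at_right t)"
    by (intro eventually_all_finite) auto
  moreover have "eventually (\<lambda>s. s > t) (at_right t)" by (simp add: eventually_at_right_less)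
  ultimately show ?thesis
  proof eventually_elim
    case (elim s)
    show ?case unfolding X_def
    proof (rule diam_le)
      fix i j
      have "norm (x s i - x s j) \<le> norm (x t i - x t j) + norm ((x s i - x s j) - (x t i - x t j))"
        using norm_quad[of "x s i" "x s j" "x t i" "x t j"] norm_triangle_ineq[of "x t i - x t j" "(x s i - x s j) - (x t i - x t j)"] by simp
      also have "\<dots> \<le> diam_fam (x t) + (s - t) * (norm (v t i - v t j) + e)"
        using elim(1)[rule_format, of "(i, j)"] diam_ge[of "x t" i j] by simp
      also have "\<dots> \<le> diam_fam (x t) + (s - t) * (2 / sqrt (Min (range p)) * sqrt (W t) + e)"
        using elim(2) vel_pair_bound[OF pm, of t i j] by (intro add_left_mono mult_left_mono) auto
      finally show "norm (x s i - x s j) \<le> diam_fam (x t) + (s - t) * (2 / sqrt (Min (range p)) * sqrt (W t) + e)" .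
    qed
  qed
qed

end
context flock begin
lemma psi_ctx_inst: "psi_ctx \<psi> (X 0)"
  by unfold_locales (use anti psi_bounds X_nonneg le1 in auto)
end

locale flock2 = flock A p \<psi> \<alpha> x v
  for A :: "'n::finite \<Rightarrow> 'n \<Rightarrow> real"
    and p :: "'n \<Rightarrow> real"
    and \<psi> :: "real \<Rightarrow> real"
    and \<alpha> :: real
    and x v :: "real \<Rightarrow> 'n \<Rightarrow> real ^ 'd::finite" +
  assumes cP_pos: "poincare_const A p > 0"
    and pm_pos: "Min (range p) > 0"
begin

definition "C = \<alpha> * poincare_const A p * sqrt (Min (range p)) / 2"
definition "L t = sqrt (W t) + C * Psi \<psi> (X 0) (X t)"

lemma C_pos: "C > 0"
proof -
  have s: "0 < sqrt (Min (range p))" using real_sqrt_gt_zero[OF pm_pos] .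
  have "0 < \<alpha> * poincare_const A p * sqrt (Min (range p))" by (intro mult_pos_pos alpha_pos cP_pos s)
  then show ?thesis unfolding C_def by (rule half_gt_zero)
qed

lemma CK: "C * (2 / sqrt (Min (range p))) = \<alpha> * poincare_const A p"
proof -
  have "\<And>m::real. m > 0 \<Longrightarrow> \<alpha> * poincare_const A p * sqrt m / 2 * (2 / sqrt m) = \<alpha> * poincare_const A p"
    by (simp add: field_simps)
  from this[OF pm_pos] show ?thesis unfolding C_def .
qed

lemma sqrtW_dini:
  assumes t: "0 \<le> t" and e: "e > 0"
  shows "eventually (\<lambda>s. sqrt (W s) \<le> sqrt (W t) + (s - t) * (- (\<alpha> * poincare_const A p) * \<psi> (X t) * sqrt (W t) + e)) (at_right t)"
proof (cases "W t > 0")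
  case True
  have dW: "(W has_real_derivative Wd t) (at t within {t<..})"
    using W_deriv[OF t] by (rule DERIV_subset) (use t in auto)
  have D: "((\<lambda>s. sqrt (W s)) has_real_derivative (inverse (sqrt (W t)) / 2 * Wd t)) (at t within {t<..})"
    using DERIV_chain2[OF DERIV_real_sqrt[OF True] dW] .
  have "inverse (sqrt (W t)) / 2 * Wd t \<le> inverse (sqrt (W t)) / 2 * (- 2 * \<alpha> * poincare_const A p * \<psi> (X t) * W t)"
    using Wd_bound[OF t order_refl] cP_pos True by (intro mult_left_mono) auto
  also have "\<dots> = - (\<alpha> * poincare_const A p) * \<psi> (X t) * sqrt (W t)"
    using True by (simp add: field_simps)
  finally have Dle: "inverse (sqrt (W t)) / 2 * Wd t \<le> - (\<alpha> * poincare_const A p) * \<psi> (X t) * sqrt (W t)" .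
  from rd_bound[OF D e] eventually_at_right_less[of t]
  show ?thesis
  proof eventually_elim
    case (elim s)
    have "(s - t) * (inverse (sqrt (W t)) / 2 * Wd t + e) \<le> (s - t) * (- (\<alpha> * poincare_const A p) * \<psi> (X t) * sqrt (W t) + e)"
      using elim(2) Dle by (intro mult_left_mono) auto
    then show ?case using elim(1) by linarith
  qed
next
  case False
  then have W0: "W t = 0" using W_nonneg[of t] by linarith
  show ?thesis using eventually_at_right_less[of t]
  proof eventually_elim
    case (elim s)
    have "W s \<le> W t" using W_anti[of t s] t elim cP_pos by auto
    then have "W s = 0" using W0 W_nonneg[of s] by linarith
    then show ?case using W0 elim e by simp
  qed
qed

lemma L_dini:
  assumes t: "0 \<le> t" and e: "e > 0"
  shows "eventually (\<lambda>s. L s \<le> L t + e * (s - t)) (at_right t)"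
proof -
  interpret P: psi_ctx \<psi> "X 0" by (rule psi_ctx_inst)
  define e' where "e' = e / (2 * (C + 1))"
  have e': "e' > 0" using e C_pos by (simp add: e'_def)
  have Ce': "C * e' \<le> e / 2"
    using C_pos e by (simp add: e'_def field_simps)
  define ps where "ps = \<psi> (X t)"
  have ps: "0 \<le> ps" "ps \<le> 1" using psi_bounds[OF X_nonneg[of t]] le1[OF X_nonneg[of t]] by (auto simp: ps_def)
  define K where "K = 2 / sqrt (Min (range p))"
  have e2: "e / 2 > 0" using e by simp
  from sqrtW_dini[OF t e2] X_dini[OF t pm_pos e'] eventually_at_right_less[of t]
  show ?thesis
  proof eventually_elim
    case (elim s)
    have h1: "sqrt (W s) \<le> sqrt (W t) + (s - t) * (- (C * K) * ps * sqrt (W t) + e / 2)"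
      using elim(1) CK by (simp add: K_def ps_def)
    have h2: "X s - X t \<le> (s - t) * (K * sqrt (W t) + e')" using elim(2) by (simp add: K_def)
    have Kpos: "0 \<le> K" unfolding K_def by (intro divide_nonneg_nonneg real_sqrt_ge_zero less_imp_le[OF pm_pos]) simp
    have nn: "0 \<le> (s - t) * (K * sqrt (W t) + e')" using elim(3) e' Kpos W_nonneg[of t]
      by (intro mult_nonneg_nonneg add_nonneg_nonneg) auto
    have "Psi \<psi> (X 0) (X s) \<le> Psi \<psi> (X 0) (X t) + ps * max 0 (X s - X t)"
      unfolding ps_def by (rule P.Psi_dini[OF X_nonneg])
    also have "\<dots> \<le> Psi \<psi> (X 0) (X t) + ps * ((s - t) * (K * sqrt (W t) + e'))"
      using h2 nn ps by (intro add_left_mono mult_left_mono) auto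
    finally have "C * Psi \<psi> (X 0) (X s) \<le> C * (Psi \<psi> (X 0) (X t) + ps * ((s - t) * (K * sqrt (W t) + e')))"
      using C_pos by (intro mult_left_mono) auto
    then have h3: "C * Psi \<psi> (X 0) (X s) \<le> C * Psi \<psi> (X 0) (X t) + C * ps * ((s - t) * (K * sqrt (W t) + e'))"
      by (simp add: distrib_left mult.assoc)
    have "L s \<le> sqrt (W t) + (s - t) * (- (C * K) * ps * sqrt (W t) + e / 2) + (C * Psi \<psi> (X 0) (X t) + C * ps * ((s - t) * (K * sqrt (W t) + e')))"
      unfolding L_def using h1 h3 by linarith
    also have "\<dots> = L t + (s - t) * (e / 2 + ps * (C * e'))"
      by (simp add: L_def algebra_simps)
    also have "\<dots> \<le> L t + (s - t) * (e / 2 + 1 * (e / 2))"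
      using elim(3) ps Ce' C_pos e' by (intro add_left_mono mult_left_mono mult_mono) auto
    finally show ?case by (simp add: algebra_simps)
  qed
qed

lemma L_cont: "continuous_on {0..T} L"
proof -
  interpret P: psi_ctx \<psi> "X 0" by (rule psi_ctx_inst)
  have "continuous_on {0..T} W" by (rule continuous_on_subset[OF W_cont]) auto
  moreover have "continuous_on {0..T} X" by (rule continuous_on_subset[OF X_cont]) auto
  moreover have "continuous_on {0..T} (\<lambda>t. Psi \<psi> (X 0) (X t))"
    using continuous_on_compose[OF calculation(2) continuous_on_subset[OF P.Psi_cont]] by (simp add: o_def)
  ultimately show ?thesis unfolding L_def by (intro continuous_intros)
qed

lemma L_le:
  assumes "0 \<le> t" shows "L t \<le> sqrt (W 0)"
proof -
  interpret P: psi_ctx \<psi> "X 0" by (rule psi_ctx_inst)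
  have "L t \<le> L 0"
    by (rule dini_mono[OF assms L_cont]) (intro L_dini, auto)
  then show ?thesis by (simp add: L_def P.Psi_x0)
qed

end
context flock2 begin

lemma X_bounded:
  assumes small: "ennreal (sqrt (W 0)) < ennreal C * (\<integral>\<^sup>+ r \<in> {X 0..}. ennreal (\<psi> r) \<partial>lborel)"
  shows "\<exists>R. \<forall>t\<ge>0. X t \<le> R"
proof -
  interpret P: psi_ctx \<psi> "X 0" by (rule psi_ctx_inst)
  have "ennreal (sqrt (W 0)) < (SUP n. ennreal C * PsiE \<psi> (X 0) (X 0 + real n))"
    using small unfolding P.PsiE_SUP SUP_mult_left_ennreal .
  then have "\<exists>n\<in>UNIV. ennreal (sqrt (W 0)) < ennreal C * PsiE \<psi> (X 0) (X 0 + real n)"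
    by (simp only: less_SUP_iff)
  then obtain n where n: "ennreal (sqrt (W 0)) < ennreal C * PsiE \<psi> (X 0) (X 0 + real n)"
    by blast
  define R where "R = X 0 + real n"
  have "ennreal C * PsiE \<psi> (X 0) R = ennreal (C * Psi \<psi> (X 0) R)"
    unfolding P.PsiE_eq using C_pos P.Psi_nonneg by (simp add: ennreal_mult)
  then have "ennreal (sqrt (W 0)) < ennreal (C * Psi \<psi> (X 0) R)"
    using n unfolding R_def by simp
  then have lt: "sqrt (W 0) < C * Psi \<psi> (X 0) R"
    using ennreal_less_iff[OF real_sqrt_ge_zero[OF W_nonneg]] by blast
  have "X t \<le> R" if t: "t \<ge> 0" for t
  proof (rule ccontr)
    assume "\<not> X t \<le> R"
    then have "Psi \<psi> (X 0) R \<le> Psi \<psi> (X 0) (X t)" by (intro P.Psi_mono) auto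
    then have "C * Psi \<psi> (X 0) R \<le> C * Psi \<psi> (X 0) (X t)" using C_pos by (intro mult_left_mono) auto
    moreover have "C * Psi \<psi> (X 0) (X t) \<le> L t" unfolding L_def using W_nonneg[of t] by simp
    moreover note L_le[OF t]
    ultimately show False using lt by linarith
  qed
  then show ?thesis by blast
qed

lemma W_decay:
  assumes R: "\<And>t. t \<ge> 0 \<Longrightarrow> X t \<le> R"
  shows "(W \<longlongrightarrow> 0) at_top"
proof -
  have R0: "0 \<le> R" using R[of 0] X_nonneg[of 0] by simp
  define k where "k = 2 * \<alpha> * poincare_const A p * \<psi> R"
  have k: "k > 0" unfolding k_def using alpha_pos cP_pos psi_bounds[OF R0] by simp
  define g where "g t = W t * exp (k * t)" for t
  have bound: "W t \<le> W 0 * exp (- k * t)" if t: "t \<ge> 0" for t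
  proof -
    have "g t \<le> g 0"
    proof (rule deriv_nonpos_mono[of 0 g "\<lambda>t. Wd t * exp (k * t) + exp (k * t) * k * W t"])
      fix u :: real assume u: "0 \<le> u"
      show "(g has_real_derivative Wd u * exp (k * u) + exp (k * u) * k * W u) (at u within {0..})"
      proof -
        have e: "((\<lambda>t. exp (k * t)) has_real_derivative exp (k * u) * k) (at u within {0..})"
          by (auto intro!: derivative_eq_intros)
        show ?thesis unfolding g_def by (rule DERIV_mult[OF W_deriv[OF u] e])
      qed
      have "Wd u \<le> - k * W u" using Wd_bound[OF u R[OF u]] cP_pos by (simp add: k_def)
      then have "Wd u + k * W u \<le> 0" by simp
      then have "exp (k * u) * (Wd u + k * W u) \<le> 0" by (simp add: mult_nonneg_nonpos)
      then show "Wd u * exp (k * u) + exp (k * u) * k * W u \<le> 0" by (simp add: algebra_simps)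
    qed (use t in auto)
    then have "W t * exp (k * t) \<le> W 0" by (simp add: g_def)
    then have "W t * exp (k * t) * exp (- k * t) \<le> W 0 * exp (- k * t)" by (intro mult_right_mono) auto
    then show ?thesis by (simp add: mult.assoc flip: exp_add)
  qed
  have "((\<lambda>t. W 0 * exp (- k * t)) \<longlongrightarrow> 0) at_top"
    using exp_decay[OF k] .
  moreover have "eventually (\<lambda>t. 0 \<le> W t) at_top" by (intro always_eventually allI W_nonneg)
  moreover have "eventually (\<lambda>t. W t \<le> W 0 * exp (- k * t)) at_top"
    using eventually_ge_at_top[of 0] by eventually_elim (rule bound)
  ultimately show ?thesis using tendsto_sandwich[OF _ _ tendsto_const, of 0 W at_top "\<lambda>t. W 0 * exp (- k * t)"] by blast
qed

lemma conclusions: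
  assumes R: "\<And>t. t \<ge> 0 \<Longrightarrow> X t \<le> R"
  shows "((\<lambda>t. diam_fam (v t)) \<longlongrightarrow> 0) at_top \<and> (\<forall>i. ((\<lambda>t. v t i) \<longlongrightarrow> vs) at_top)"
proof -
  have sW: "((\<lambda>t. sqrt (W t)) \<longlongrightarrow> 0) at_top"
    using tendsto_real_sqrt[OF W_decay[OF R]] by simp
  have l1: "((\<lambda>t. 2 / sqrt (Min (range p)) * sqrt (W t)) \<longlongrightarrow> 0) at_top"
    by (rule tendsto_mult_right_zero[OF sW])
  have l2: "((\<lambda>t. sqrt (W t) / sqrt (Min (range p))) \<longlongrightarrow> 0) at_top"
    by (rule tendsto_divide_zero[OF sW])
  have a: "((\<lambda>t. diam_fam (v t)) \<longlongrightarrow> 0) at_top"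
  proof (rule tendsto_sandwich[OF _ _ tendsto_const l1])
    show "eventually (\<lambda>t. 0 \<le> diam_fam (v t)) at_top" by (intro always_eventually allI diam_nonneg)
    show "eventually (\<lambda>t. diam_fam (v t) \<le> 2 / sqrt (Min (range p)) * sqrt (W t)) at_top"
      by (intro always_eventually allI diam_le vel_pair_bound pm_pos)
  qed
  have b: "((\<lambda>t. norm (v t i - vs)) \<longlongrightarrow> 0) at_top" for i
  proof (rule tendsto_sandwich[OF _ _ tendsto_const l2])
    show "eventually (\<lambda>t. 0 \<le> norm (v t i - vs)) at_top" by simp
    show "eventually (\<lambda>t. norm (v t i - vs) \<le> sqrt (W t) / sqrt (Min (range p))) at_top"
      by (intro always_eventually allI vel_bound pm_pos)
  qed
  have "((\<lambda>t. v t i) \<longlongrightarrow> vs) at_top" for i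
    by (rule LIM_zero_cancel, rule tendsto_norm_zero_cancel, rule b)
  with a show ?thesis by blast
qed

end

theorem theorem3p2:
  fixes A :: "'n::finite \<Rightarrow> 'n \<Rightarrow> real"
    and p :: "'n \<Rightarrow> real"
    and \<psi> :: "real \<Rightarrow> real"
    and \<alpha> :: real
    and x v :: "real \<Rightarrow> 'n \<Rightarrow> real ^ 'd::finite"
  assumes alpha_pos: "\<alpha> > 0"
    and A_nonneg: "\<And>i j. A i j \<ge> 0"
    and psi_mono: "\<And>r1 r2. r1 \<ge> 0 \<Longrightarrow> r2 \<ge> 0 \<Longrightarrow> (r1 - r2) * (\<psi> r1 - \<psi> r2) \<le> 0"
    and psi_bounds: "\<And>r. r \<ge> 0 \<Longrightarrow> 0 < \<psi> r \<and> \<psi> r \<le> \<psi> 0 \<and> \<psi> 0 \<le> 1"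
    and irred: "irreducible_graph A"
    and p_nonneg: "\<And>i. p i \<ge> 0"
    and p_sum: "(\<Sum>i\<in>UNIV. p i) = 1"
    and reversible: "\<And>i j. i \<noteq> j \<Longrightarrow> p i * A i j = p j * A j i"
    and dx: "\<And>i t. t \<ge> 0 \<Longrightarrow> ((\<lambda>s. x s i) has_vector_derivative v t i) (at t within {0..})"
    and dv: "\<And>i t. t \<ge> 0 \<Longrightarrow> ((\<lambda>s. v s i) has_vector_derivative
               (\<alpha> *\<^sub>R (\<Sum>j\<in>UNIV - {i}. (A i j * \<psi> (norm (x t j - x t i))) *\<^sub>R (v t j - v t i))))
               (at t within {0..})"
    and small: "ennreal (sqrt (\<Sum>i\<in>UNIV. p i * (norm (v 0 i - (\<Sum>k\<in>UNIV. p k *\<^sub>R v 0 k)))\<^sup>2))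
               < ennreal (\<alpha> * poincare_const A p * sqrt (Min (range p)) / 2)
                 * (\<integral>\<^sup>+ r \<in> {diam_fam (x 0)..}. ennreal (\<psi> r) \<partial>lborel)"
  shows "(\<exists>B. \<forall>t\<ge>0. diam_fam (x t) \<le> B)
    \<and> ((\<lambda>t. diam_fam (v t)) \<longlongrightarrow> 0) at_top
    \<and> (\<forall>i. ((\<lambda>t. v t i) \<longlongrightarrow> (\<Sum>k\<in>UNIV. p k *\<^sub>R v 0 k)) at_top)"
proof -
  interpret F: flock A p \<psi> \<alpha> x v
    by unfold_locales (use alpha_pos A_nonneg psi_mono psi_bounds p_nonneg p_sum reversible dx dv in auto)
  define c0 where "c0 = \<alpha> * poincare_const A p * sqrt (Min (range p)) / 2"
  have c0: "c0 > 0"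
  proof (rule ccontr)
    assume "\<not> c0 > 0"
    then have "ennreal c0 = 0" by (simp add: ennreal_eq_0_iff)
    then show False using small by (simp add: c0_def)
  qed
  have pm0: "0 \<le> Min (range p)"
  proof -
    have "Min (range p) \<in> range p" by (intro Min_in) auto
    then show ?thesis using p_nonneg by auto
  qed
  have pm: "0 < Min (range p)"
  proof (rule ccontr)
    assume "\<not> 0 < Min (range p)"
    then have "Min (range p) = 0" using pm0 by linarith
    then show False using c0 by (simp add: c0_def)
  qed
  have "0 < \<alpha> * (poincare_const A p * sqrt (Min (range p)))" using c0 by (simp add: c0_def mult.assoc)
  then have "0 < poincare_const A p * sqrt (Min (range p))" using alpha_pos by (simp add: zero_less_mult_iff)
  then have cP: "0 < poincare_const A p"
  proof -
    assume h: "0 < poincare_const A p * sqrt (Min (range p))"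
    show ?thesis
    proof (rule ccontr)
      assume "\<not> 0 < poincare_const A p"
      then have "poincare_const A p * sqrt (Min (range p)) \<le> 0"
        using real_sqrt_ge_zero[OF pm0] by (intro mult_nonpos_nonneg) auto
      then show False using h by linarith
    qed
  qed
  interpret G: flock2 A p \<psi> \<alpha> x v
    by unfold_locales (use cP pm in auto)
  have sm: "ennreal (sqrt (F.W 0)) < ennreal G.C * (\<integral>\<^sup>+ r \<in> {F.X 0..}. ennreal (\<psi> r) \<partial>lborel)"
    unfolding F.W_def F.vs_def G.C_def F.X_def by (rule small)
  obtain R where R: "\<And>t. t \<ge> 0 \<Longrightarrow> F.X t \<le> R" using G.X_bounded[OF sm] by blast
  have bnd: "\<exists>B. \<forall>t\<ge>0. diam_fam (x t) \<le> B"
    using R unfolding F.X_def by blast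
  have c: "((\<lambda>t. diam_fam (v t)) \<longlongrightarrow> 0) at_top \<and> (\<forall>i. ((\<lambda>t. v t i) \<longlongrightarrow> (\<Sum>k\<in>UNIV. p k *\<^sub>R v 0 k)) at_top)"
    using G.conclusions[OF R] unfolding F.vs_def .
  show ?thesis using bnd c by (rule conjI)
qed

end
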